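(* Let $N$ be a positive integer and let $E$ and $F$ each be a union of $N$ pairwise disjoint closed (nondegenerate) subarcs of $\mathbb{T}$. If $\hat\chi_E(n)=\hat\chi_F(n)$ for $n=0,1,\dots,N$, then $E=F$.
   Context: $\mathbb{T}$ is the unit circle with normalized Lebesgue measure; $\chi_E$ is the indicator function of $E$, and $\hat f(n)=\frac{1}{2\pi}\int_0^{2\pi} f(e^{i\theta})e^{-in\theta}\,d\theta$. *)

theory Defs
  imports "HOL-Analysis.Analysis"
begin

definition closed_arc :: "complex set \<Rightarrow> bool" where
  "closed_arc A \<longleftrightarrow> (\<exists>a b::real. a < b \<and> b - a < 2 * pi \<and> A = cis ` {a..b})"

definition union_of_disjoint_arcs :: "nat \<Rightarrow> complex set \<Rightarrow> bool" where
  "union_of_disjoint_arcs N E \<longleftrightarrow>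
     (\<exists>A :: nat \<Rightarrow> complex set.
        (\<forall>i<N. closed_arc (A i)) \<and>
        (\<forall>i<N. \<forall>j<N. i \<noteq> j \<longrightarrow> A i \<inter> A j = {}) \<and>
        E = (\<Union>i<N. A i))"

definition fourier_indicator :: "complex set \<Rightarrow> int \<Rightarrow> complex" where
  "fourier_indicator E n =
     (1 / (2 * pi)) * integral {0..2*pi} (\<lambda>\<theta>. indicator E (cis \<theta>) * cis (- (of_int n * \<theta>)))"

end

theory Submission
  imports Defs
begin

lemma arc_char:
  fixes a b \<theta> :: real
  assumes ab: "a < b" "b - a < 2*pi"
  shows "cis \<theta> \<in> cis ` {a..b} \<longleftrightarrow> cos ((b-a)/2) \<le> cos (\<theta> - (a+b)/2)"
proof -
  define m where "m = (a+b)/2"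
  define h where "h = (b-a)/2"
  have h: "0 < h" "h < pi" using ab by (auto simp: h_def)
  have key: "cis \<theta> = cis m * cis (\<theta> - m)" by (simp add: cis_mult)
  show ?thesis unfolding m_def[symmetric] h_def[symmetric]
  proof
    assume "cis \<theta> \<in> cis ` {a..b}"
    then obtain \<phi> where \<phi>: "\<phi> \<in> {a..b}" "cis \<theta> = cis \<phi>" by auto
    have "cis (\<theta> - m) = cis (\<phi> - m)"
      using \<phi>(2) by (simp add: cis_divide[symmetric])
    hence "Re (cis (\<theta> - m)) = Re (cis (\<phi> - m))" by (rule arg_cong)
    hence c: "cos (\<theta> - m) = cos (\<phi> - m)" by simp
    have "\<phi> - m \<le> h" "-(\<phi> - m) \<le> h" using \<phi>(1) unfolding m_def h_def by (simp_all add: field_simps)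
    hence "\<bar>\<phi> - m\<bar> \<le> h" by (simp add: abs_le_iff)
    hence "cos h \<le> cos \<bar>\<phi> - m\<bar>" using h by (intro cos_monotone_0_pi_le) auto
    thus "cos h \<le> cos (\<theta> - m)" using c by simp
  next
    assume A: "cos h \<le> cos (\<theta> - m)"
    define \<psi> where "\<psi> = arccos (cos (\<theta> - m))"
    have p: "0 \<le> \<psi>" "\<psi> \<le> pi" "cos \<psi> = cos (\<theta> - m)" unfolding \<psi>_def
      by (auto intro: arccos_lbound arccos_ubound cos_arccos)
    have "cos h \<le> cos \<psi>" using A p(3) by simp
    hence "\<psi> \<le> h" using cos_mono_le_eq[of h \<psi>] h p by simp
    have q1: "sin \<psi> ^ 2 + cos \<psi> ^ 2 = 1" "sin (\<theta> - m) ^ 2 + cos (\<theta> - m) ^ 2 = 1"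
      by (rule sin_cos_squared_add)+
    have "cos \<psi> ^ 2 = cos (\<theta> - m) ^ 2" using p(3) by simp
    hence s: "sin (\<theta> - m) ^ 2 = sin \<psi> ^ 2" using q1 by linarith
    have "sin (\<theta> - m) = sin \<psi> \<or> sin (\<theta> - m) = - sin \<psi>"
      using power2_eq_iff[of "sin (\<theta> - m)" "sin \<psi>"] s by blast
    then show "cis \<theta> \<in> cis ` {a..b}"
    proof
      assume "sin (\<theta> - m) = sin \<psi>"
      hence "cis (\<theta> - m) = cis \<psi>" using p by (simp add: complex_eq_iff)
      hence "cis \<theta> = cis (m + \<psi>)" using key by (simp add: cis_mult)
      moreover have "m + \<psi> \<in> {a..b}" using \<open>\<psi> \<le> h\<close> p(1) by (simp_all add: m_def h_def field_simps)
      ultimately show ?thesis by blast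
    next
      assume "sin (\<theta> - m) = - sin \<psi>"
      hence "cis (\<theta> - m) = cis (-\<psi>)" using p by (simp add: complex_eq_iff)
      hence "cis \<theta> = cis (m + -\<psi>)" using key by (simp add: cis_mult)
      moreover have "m + -\<psi> \<in> {a..b}" using \<open>\<psi> \<le> h\<close> p(1) by (simp_all add: m_def h_def field_simps)
      ultimately show ?thesis by blast
    qed
  qed
qed

lemma isCont_cis': "isCont cis x"
  using continuous_on_cis[OF continuous_on_id, of UNIV] by (simp add: continuous_on_eq_continuous_at)

definition tp :: "(int \<times> complex) list \<Rightarrow> real \<Rightarrow> complex" where
  "tp xs \<theta> = (\<Sum>(k,c)\<leftarrow>xs. c * cis (of_int k * \<theta>))"

lemma tp_Nil[simp]: "tp [] \<theta> = 0" by (simp add: tp_def)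
lemma tp_Cons[simp]: "tp ((k,c)#xs) \<theta> = c * cis (of_int k * \<theta>) + tp xs \<theta>" by (simp add: tp_def)
lemma tp_append[simp]: "tp (xs @ ys) \<theta> = tp xs \<theta> + tp ys \<theta>" by (simp add: tp_def)

lemma tp_mult1: "c * cis (of_int k * \<theta>) * tp ys \<theta> = tp (map (\<lambda>(k',c'). (k+k', c*c')) ys) \<theta>"
  by (induction ys) (auto simp: distrib_left distrib_right cis_mult[symmetric] algebra_simps)

lemma tp_mult: "tp xs \<theta> * tp ys \<theta> = tp (concat (map (\<lambda>(k,c). map (\<lambda>(k',c'). (k+k', c*c')) ys) xs)) \<theta>"
  by (induction xs) (auto simp: distrib_right tp_mult1)

lemma tp_factor: "complex_of_real (cos h - cos (\<theta> - m)) = tp [(0, complex_of_real (cos h)), (1, - cis (-m) / 2), (-1, - cis m / 2)] \<theta>"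
  by (simp add: complex_eq_iff cis_mult cos_diff cos_add sin_add sin_diff algebra_simps) (simp add: field_simps)

lemma trig_exists:
  fixes h m :: "nat \<Rightarrow> real"
  shows "\<exists>xs. (\<forall>(k,c)\<in>set xs. \<bar>k\<bar> \<le> int n) \<and> (\<forall>\<theta>. complex_of_real (\<Prod>j<n. cos (h j) - cos (\<theta> - m j)) = tp xs \<theta>)"
proof (induction n)
  case 0
  show ?case by (rule exI[of _ "[(0,1)]"]) auto
next
  case (Suc n)
  then obtain xs where xs: "\<forall>(k,c)\<in>set xs. \<bar>k\<bar> \<le> int n" "\<forall>\<theta>. complex_of_real (\<Prod>j<n. cos (h j) - cos (\<theta> - m j)) = tp xs \<theta>" by blast
  define ys where "ys = [(0::int, complex_of_real (cos (h n))), (1, - cis (- m n) / 2), (-1, - cis (m n) / 2)]"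
  show ?case
  proof (rule exI[of _ "concat (map (\<lambda>(k,c). map (\<lambda>(k',c'). (k+k', c*c')) ys) xs)"], intro conjI allI)
    show "\<forall>(k,c)\<in>set (concat (map (\<lambda>(k,c). map (\<lambda>(k',c'). (k+k', c*c')) ys) xs)). \<bar>k\<bar> \<le> int (Suc n)"
      using xs(1) unfolding ys_def by fastforce
    fix \<theta>
    have "complex_of_real (\<Prod>j<Suc n. cos (h j) - cos (\<theta> - m j)) = 
       complex_of_real (\<Prod>j<n. cos (h j) - cos (\<theta> - m j)) * complex_of_real (cos (h n) - cos (\<theta> - m n))"
      by simp
    also have "\<dots> = tp xs \<theta> * tp ys \<theta>" using xs(2) tp_factor unfolding ys_def by metis
    finally show "complex_of_real (\<Prod>j<Suc n. cos (h j) - cos (\<theta> - m j)) = tp (concat (map (\<lambda>(k,c). map (\<lambda>(k',c'). (k+k', c*c')) ys) xs)) \<theta>"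
      by (simp add: tp_mult)
  qed
qed

lemma tp_integral:
  fixes g :: "real \<Rightarrow> complex"
  assumes "\<And>k. \<bar>k\<bar> \<le> int N \<Longrightarrow> (\<lambda>\<theta>. g \<theta> * cis (of_int k * \<theta>)) integrable_on S \<and> integral S (\<lambda>\<theta>. g \<theta> * cis (of_int k * \<theta>)) = 0"
  shows "(\<forall>(k,c)\<in>set xs. \<bar>k\<bar> \<le> int N) \<Longrightarrow> (\<lambda>\<theta>. g \<theta> * tp xs \<theta>) integrable_on S \<and> integral S (\<lambda>\<theta>. g \<theta> * tp xs \<theta>) = 0"
proof (induction xs)
  case Nil
  then show ?case by (simp add: integrable_0)
next
  case (Cons p xs)
  obtain k c where p: "p = (k,c)" by fastforce
  have k: "\<bar>k\<bar> \<le> int N" using Cons.prems p by auto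
  have IH: "(\<lambda>\<theta>. g \<theta> * tp xs \<theta>) integrable_on S \<and> integral S (\<lambda>\<theta>. g \<theta> * tp xs \<theta>) = 0"
    using Cons by auto
  have e: "(\<lambda>\<theta>. g \<theta> * tp (p#xs) \<theta>) = (\<lambda>\<theta>. c * (g \<theta> * cis (of_int k * \<theta>)) + g \<theta> * tp xs \<theta>)"
    by (auto simp: p algebra_simps)
  have i1: "(\<lambda>\<theta>. c * (g \<theta> * cis (of_int k * \<theta>))) integrable_on S"
    using assms[OF k] integrable_on_mult_right by blast
  show ?case unfolding e using IH i1 assms[OF k]
    by (simp add: integrable_add integral_add)
qed

lemma closed_lebesgue: "closed (S::real set) \<Longrightarrow> S \<in> sets lebesgue"
  by (metis borel_closed sets_completionI_sets sets_lborel)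

lemma indic_integrable:
  fixes f :: "real \<Rightarrow> complex"
  assumes S: "closed S" and f: "continuous_on {a..b} f"
  shows "(\<lambda>\<theta>. indicator S (cis \<theta>) * f \<theta>) integrable_on {a..b}"
proof -
  have cl: "closed (cis -` S)" by (intro closed_vimage S) (auto intro: continuous_intros)
  have "f absolutely_integrable_on {a..b}" by (rule absolutely_integrable_continuous_real[OF f])
  hence "f absolutely_integrable_on ((cis -` S) \<inter> {a..b})"
    by (rule set_integrable_subset) (auto intro!: closed_lebesgue closed_Int cl)
  hence "f integrable_on ((cis -` S) \<inter> {a..b})" by (rule set_lebesgue_integral_eq_integral(1))
  hence "(\<lambda>x. if x \<in> cis -` S then f x else 0) integrable_on {a..b}"
    using integrable_restrict_Int by blast
  moreover have "(\<lambda>x. if x \<in> cis -` S then f x else 0) = (\<lambda>\<theta>. indicator S (cis \<theta>) * f \<theta>)"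
    by (auto simp: indicator_def)
  ultimately show ?thesis by simp
qed

lemma cis_periodic_cos:
  assumes "cis x = cis y" shows "cos (x - m) = cos (y - m)"
proof -
  have "cos x = cos y" "sin x = sin y" using assms by (metis cis.sel(1), metis cis.sel(2))
  thus ?thesis by (simp add: cos_diff)
qed

lemma cis_reduce: "\<exists>t. 0 \<le> t \<and> t < 2*pi \<and> cis t = cis x"
proof -
  define t where "t = x - 2*pi * of_int \<lfloor>x / (2*pi)\<rfloor>"
  have t3: "0 \<le> t" "t < 2*pi"
  proof -
    define q where "q = x / (2*pi)"
    have r: "0 \<le> q - of_int \<lfloor>q\<rfloor>" "q - of_int \<lfloor>q\<rfloor> < 1" by linarith+
    have e: "t = 2*pi * (q - of_int \<lfloor>q\<rfloor>)" by (simp add: t_def q_def algebra_simps)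
    show "0 \<le> t" unfolding e using r(1) by simp
    have "2*pi * (q - of_int \<lfloor>q\<rfloor>) < 2*pi * 1" using r(2) by (intro mult_strict_left_mono) auto
    thus "t < 2*pi" unfolding e by simp
  qed
  have "cis t = cis x"
  proof -
    have e: "t = x + 2 * pi * real_of_int (- \<lfloor>x / (2*pi)\<rfloor>)" by (simp add: t_def)
    have "sin t = sin x \<and> cos t = cos x" using sin_cos_eq_iff[of t x] e by blast
    thus ?thesis by (simp add: complex_eq_iff)
  qed
  thus ?thesis using t3 by blast
qed

lemma int_const_pos: assumes "c < (d::real)" "(t::real) > 0" shows "integral {c..d} (\<lambda>_. t) > 0"
proof -
  have "integral {c..d} (\<lambda>_. t) = (d - c) * t" using assms(1) by simp
  thus ?thesis using assms by simp
qed

lemma int_sub_le: fixes P :: "real \<Rightarrow> real"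
  assumes "P integrable_on {c..d}" "P integrable_on {0..2*pi}" "{c..d} \<subseteq> {0..2*pi}" "\<And>x. P x \<ge> 0"
  shows "integral {c..d} P \<le> integral {0..2*pi} P"
  using integral_subset_component_le[of 1 "{c..d}" "{0..2*pi}" P] assms by simp

lemma main_lemma:
  fixes a b :: "nat \<Rightarrow> real" and E F :: "complex set"
  assumes E: "E = (\<Union>i<N. cis ` {a i..b i})"
    and ab: "\<And>i. i < N \<Longrightarrow> a i < b i \<and> b i - a i < 2*pi"
    and disj: "\<And>i j. i < N \<Longrightarrow> j < N \<Longrightarrow> i \<noteq> j \<Longrightarrow> cis ` {a i..b i} \<inter> cis ` {a j..b j} = {}"
    and Fc: "closed F"
    and G: "\<And>k. \<bar>k\<bar> \<le> int N \<Longrightarrow>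
       (\<lambda>\<theta>. (indicator E (cis \<theta>) - indicator F (cis \<theta>)) * cis (of_int k * \<theta>)) integrable_on {0..2*pi} \<and>
       integral {0..2*pi} (\<lambda>\<theta>. (indicator E (cis \<theta>) - indicator F (cis \<theta>)) * cis (of_int k * \<theta>)) = 0"
  shows "E \<subseteq> F"
proof (rule ccontr)
  assume "\<not> E \<subseteq> F"
  then obtain x where x: "x \<in> E" "x \<notin> F" by blast
  define h where "h i = (b i - a i)/2" for i
  define m where "m i = (a i + b i)/2" for i
  define fac where "fac i \<theta> = cos (h i) - cos (\<theta> - m i)" for i \<theta>
  define T where "T \<theta> = (\<Prod>j<N. fac j \<theta>)" for \<theta>
  have arc: "cis \<theta> \<in> cis ` {a i..b i} \<longleftrightarrow> fac i \<theta> \<le> 0" if "i < N" for i \<theta>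
    using arc_char[of "a i" "b i" \<theta>] ab[OF that] by (simp add: fac_def h_def m_def)
  have Tpos: "T \<theta> > 0" if "cis \<theta> \<notin> E" for \<theta>
    unfolding T_def using that arc by (intro prod_pos) (force simp: E)
  have Tsplit: "T \<theta> = fac j \<theta> * (\<Prod>i\<in>{..<N}-{j}. fac i \<theta>) \<and> (\<Prod>i\<in>{..<N}-{j}. fac i \<theta>) > 0"
    if j: "j < N" "cis \<theta> \<in> cis ` {a j..b j}" for j \<theta>
  proof
    show "T \<theta> = fac j \<theta> * (\<Prod>i\<in>{..<N}-{j}. fac i \<theta>)"
      unfolding T_def using j by (simp add: prod.remove)
    show "(\<Prod>i\<in>{..<N}-{j}. fac i \<theta>) > 0"
    proof (intro prod_pos)
      fix i assume i: "i \<in> {..<N}-{j}"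
      hence "cis \<theta> \<notin> cis ` {a i..b i}" using disj[of i j] j by auto
      thus "0 < fac i \<theta>" using arc[of i \<theta>] i by auto
    qed
  qed
  define Gr where "Gr \<theta> = (indicator E (cis \<theta>) - indicator F (cis \<theta>) :: real)" for \<theta>
  have GT: "Gr \<theta> * T \<theta> \<le> 0" for \<theta>
  proof (cases "cis \<theta> \<in> E")
    case True
    then obtain j where j: "j < N" "cis \<theta> \<in> cis ` {a j..b j}" using E by auto
    have "T \<theta> \<le> 0" using Tsplit[OF j] arc[OF j(1)] j(2) by (simp add: mult_nonpos_nonneg)
    thus ?thesis using True by (simp add: Gr_def indicator_def)
  next
    case False
    thus ?thesis using Tpos[OF False] by (simp add: Gr_def indicator_def)
  qed
  obtain xs where xs: "\<forall>(k,c)\<in>set xs. \<bar>k\<bar> \<le> int N" "\<forall>\<theta>. complex_of_real (T \<theta>) = tp xs \<theta>"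
    using trig_exists[of N h m] unfolding T_def fac_def by blast
  have ofG: "(indicator E (cis \<theta>) - indicator F (cis \<theta>) :: complex) = complex_of_real (Gr \<theta>)" for \<theta>
    by (simp add: Gr_def indicator_def)
  have I0: "(\<lambda>\<theta>. complex_of_real (Gr \<theta>) * tp xs \<theta>) integrable_on {0..2*pi} \<and>
      integral {0..2*pi} (\<lambda>\<theta>. complex_of_real (Gr \<theta>) * tp xs \<theta>) = 0"
    by (rule tp_integral[OF _ xs(1)]) (use G ofG in simp)
  have eqf: "(\<lambda>\<theta>. complex_of_real (Gr \<theta>) * tp xs \<theta>) = (\<lambda>\<theta>. complex_of_real (- (Gr \<theta> * T \<theta>)) * (-1))"
    using xs(2) by (auto simp flip: xs(2))
  define P where "P \<theta> = - (Gr \<theta> * T \<theta>)" for \<theta>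
  have I1: "(\<lambda>\<theta>. complex_of_real (P \<theta>)) integrable_on {0..2*pi} \<and> integral {0..2*pi} (\<lambda>\<theta>. complex_of_real (P \<theta>)) = 0"
  proof -
    have a: "(\<lambda>\<theta>. complex_of_real (P \<theta>) * (-1)) integrable_on {0..2*pi}" "integral {0..2*pi} (\<lambda>\<theta>. complex_of_real (P \<theta>) * (-1)) = 0"
      using I0 unfolding eqf P_def by auto
    have "(\<lambda>\<theta>. complex_of_real (P \<theta>) * (-1) * (-1)) integrable_on {0..2*pi}"
      using integrable_on_mult_left[OF a(1)] by blast
    thus ?thesis using a(2) by simp
  qed
  have Pint: "P integrable_on {0..2*pi}" and Pzero: "integral {0..2*pi} P = 0"
  proof -
    have "(Re \<circ> (\<lambda>\<theta>. complex_of_real (P \<theta>))) integrable_on {0..2*pi}"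
      using I1 integrable_linear bounded_linear_Re by blast
    thus "P integrable_on {0..2*pi}" by (simp add: o_def)
    have "integral {0..2*pi} (Re \<circ> (\<lambda>\<theta>. complex_of_real (P \<theta>))) = Re 0"
      using I1 integral_linear bounded_linear_Re by metis
    thus "integral {0..2*pi} P = 0" by (simp add: o_def)
  qed
  have Pnn: "P \<theta> \<ge> 0" for \<theta> using GT[of \<theta>] by (simp add: P_def)
  obtain j \<theta>1 where j: "j < N" "\<theta>1 \<in> {a j..b j}" "x = cis \<theta>1" using x(1) E by auto
  have hj: "0 < h j" "h j < pi" using ab[OF j(1)] by (auto simp: h_def)
  have "open (- F)" using Fc by auto
  then obtain \<epsilon> where \<epsilon>: "\<epsilon> > 0" "\<And>y. dist y x < \<epsilon> \<Longrightarrow> y \<notin> F"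
    using x(2) unfolding open_dist by blast
  have "isCont cis \<theta>1" by (rule isCont_cis')
  then obtain \<delta> where \<delta>: "\<delta> > 0" "\<And>\<theta>. dist \<theta> \<theta>1 < \<delta> \<Longrightarrow> dist (cis \<theta>) (cis \<theta>1) < \<epsilon>"
    using \<epsilon>(1) unfolding continuous_at_eps_delta by blast
  define \<theta>2 where "\<theta>2 = (if \<theta>1 \<le> m j then min (\<theta>1 + \<delta>/2) (m j) else max (\<theta>1 - \<delta>/2) (m j))"
  have am: "m j - a j = h j" "b j - m j = h j" by (simp_all add: m_def h_def field_simps)
  have d2: "dist \<theta>2 \<theta>1 < \<delta>" and c2: "\<bar>\<theta>2 - m j\<bar> < h j"
  proof -
    have "\<bar>\<theta>2 - \<theta>1\<bar> < \<delta> \<and> \<bar>\<theta>2 - m j\<bar> < h j"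
    proof (cases "\<theta>1 \<le> m j")
      case True
      hence t: "\<theta>2 = min (\<theta>1 + \<delta>/2) (m j)" by (simp add: \<theta>2_def)
      have "a j < \<theta>2" "\<theta>1 \<le> \<theta>2" "\<theta>2 \<le> \<theta>1 + \<delta>/2" "\<theta>2 \<le> m j" using True hj am \<delta>(1) j(2) unfolding t by auto
      thus ?thesis using j(2) am \<delta>(1) by (simp add: abs_if)
    next
      case False
      hence t: "\<theta>2 = max (\<theta>1 - \<delta>/2) (m j)" by (simp add: \<theta>2_def)
      have "\<theta>2 < b j" "\<theta>2 \<le> \<theta>1" "\<theta>1 - \<delta>/2 \<le> \<theta>2" "m j \<le> \<theta>2" using False hj am \<delta>(1) j(2) unfolding t by auto
      thus ?thesis using j(2) am \<delta>(1) by (simp add: abs_if)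
    qed
    thus "dist \<theta>2 \<theta>1 < \<delta>" "\<bar>\<theta>2 - m j\<bar> < h j" by (simp_all add: dist_real_def)
  qed
  have notF2: "cis \<theta>2 \<notin> F" using \<epsilon>(2) \<delta>(2)[OF d2] j(3) by auto
  have "cos (h j) < cos \<bar>\<theta>2 - m j\<bar>" using c2 hj by (intro cos_monotone_0_pi) auto
  hence f2: "fac j \<theta>2 < 0" by (simp add: fac_def)
  hence "cis \<theta>2 \<in> cis ` {a j..b j}" using arc[OF j(1)] by simp
  hence T2: "T \<theta>2 < 0" using Tsplit[of j \<theta>2] j(1) f2 by (simp add: mult_neg_pos)
  obtain \<theta>3 where t3: "0 \<le> \<theta>3" "\<theta>3 < 2*pi" and cis3: "cis \<theta>3 = cis \<theta>2"
    using cis_reduce[of \<theta>2] by blast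
  have T3: "T \<theta>3 = T \<theta>2" unfolding T_def fac_def using cis_periodic_cos[OF cis3] by simp
  define U where "U = {\<theta>. T \<theta> < 0} \<inter> - (cis -` F)"
  have Tcont: "continuous_on A T" for A unfolding T_def fac_def by (intro continuous_intros)
  have "closed (cis -` F)" by (rule closed_vimage[OF Fc continuous_on_cis[OF continuous_on_id]])
  moreover have "open {\<theta>. T \<theta> < 0}" by (rule open_Collect_less[OF Tcont continuous_on_const])
  ultimately have "open U" unfolding U_def by auto
  moreover have "\<theta>3 \<in> U" using T3 T2 cis3 notF2 by (simp add: U_def)
  ultimately obtain \<delta>' where \<delta>': "\<delta>' > 0" "\<And>\<theta>. dist \<theta> \<theta>3 < \<delta>' \<Longrightarrow> \<theta> \<in> U"
    unfolding open_dist by blast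
  define c where "c = \<theta>3"
  define d where "d = min (\<theta>3 + \<delta>'/2) (2*pi)"
  have cd1: "c < d" using t3 \<delta>'(1) by (simp add: c_def d_def)
  have cd2: "{c..d} \<subseteq> {0..2*pi}" using t3 by (simp add: c_def d_def)
  have inU: "\<theta> \<in> U" if "\<theta> \<in> {c..d}" for \<theta>
  proof (rule \<delta>'(2))
    have "c \<le> \<theta>" "\<theta> \<le> \<theta>3 + \<delta>'/2" using that by (simp_all add: d_def)
    thus "dist \<theta> \<theta>3 < \<delta>'" using \<delta>'(1) by (simp add: dist_real_def c_def)
  qed
  have Peq: "P \<theta> = - T \<theta>" if "\<theta> \<in> {c..d}" for \<theta>
  proof -
    have "T \<theta> < 0" "cis \<theta> \<notin> F" using inU[OF that] by (simp_all add: U_def)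
    moreover have "cis \<theta> \<in> E" using Tpos[of \<theta>] \<open>T \<theta> < 0\<close> by linarith
    ultimately show ?thesis by (simp add: P_def Gr_def)
  qed
  have "continuous_on {c..d} (\<lambda>\<theta>. - T \<theta>)" by (intro continuous_intros Tcont)
  moreover have "{c..d} \<noteq> {}" using cd1 by simp
  ultimately obtain x0 where x0: "x0 \<in> {c..d}" "\<And>y. y \<in> {c..d} \<Longrightarrow> - T x0 \<le> - T y"
    using continuous_attains_inf[of "{c..d}" "\<lambda>\<theta>. - T \<theta>"] compact_Icc by blast
  have eta: "T x0 < 0" using inU[OF x0(1)] by (simp add: U_def)
  have Pint': "P integrable_on {c..d}" using Pint cd2 integrable_on_subinterval by blast
  have "integral {c..d} (\<lambda>_. - T x0) \<le> integral {c..d} P"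
  proof (rule integral_le[OF integrable_const_ivl Pint'])
    fix y assume "y \<in> {c..d}" thus "- T x0 \<le> P y" using x0(2) Peq by simp
  qed
  moreover have "integral {c..d} (\<lambda>_. - T x0) > 0" using int_const_pos[OF cd1, of "- T x0"] eta by linarith
  moreover have "integral {c..d} P \<le> integral {0..2*pi} P" by (rule int_sub_le[OF Pint' Pint cd2 Pnn])
  ultimately show False using Pzero by linarith
qed

lemma arcs_repr:
  assumes "union_of_disjoint_arcs N E"
  shows "\<exists>a b. E = (\<Union>i<N. cis ` {a i..b i}) \<and> (\<forall>i<N. a i < b i \<and> b i - a i < 2*pi) \<and>
     (\<forall>i<N. \<forall>j<N. i \<noteq> j \<longrightarrow> cis ` {a i..b i} \<inter> cis ` {a j..b j} = {})"
proof -
  obtain A where A: "\<forall>i<N. closed_arc (A i)" "\<forall>i<N. \<forall>j<N. i \<noteq> j \<longrightarrow> A i \<inter> A j = {}" "E = (\<Union>i<N. A i)"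
    using assms unfolding union_of_disjoint_arcs_def by blast
  have "\<forall>i\<in>{..<N}. \<exists>p. fst p < snd p \<and> snd p - fst p < 2*pi \<and> A i = cis ` {fst p..snd p}"
    using A(1) unfolding closed_arc_def by fastforce
  then obtain p where p: "\<forall>i\<in>{..<N}. fst (p i) < snd (p i) \<and> snd (p i) - fst (p i) < 2*pi \<and> A i = cis ` {fst (p i)..snd (p i)}"
    by (metis bchoice)
  show ?thesis
    by (rule exI[of _ "\<lambda>i. fst (p i)"], rule exI[of _ "\<lambda>i. snd (p i)"]) (use A p in auto)
qed

lemma arcs_closed: "closed (\<Union>i<(N::nat). cis ` {a i..b i})"
proof (rule closed_UN)
  show "finite {..<N}" by simp
  show "\<forall>i\<in>{..<N}. closed (cis ` {a i..b i})"
    by (intro ballI compact_imp_closed compact_continuous_image continuous_on_cis[OF continuous_on_id] compact_Icc)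
qed

definition II :: "complex set \<Rightarrow> int \<Rightarrow> complex" where
  "II S k = integral {0..2*pi} (\<lambda>\<theta>. indicator S (cis \<theta>) * cis (of_int k * \<theta>))"

lemma II_cnj: "cnj (II S k) = II S (-k)"
  unfolding II_def integral_cnj by (intro integral_cong) (auto simp: cis_cnj indicator_def)

theorem corollary5p3:
  fixes N :: nat and E F :: "complex set"
  assumes "N > 0"
    and "union_of_disjoint_arcs N E"
    and "union_of_disjoint_arcs N F"
    and "\<forall>n::int. 0 \<le> n \<and> n \<le> int N \<longrightarrow> fourier_indicator E n = fourier_indicator F n"
  shows "E = F"
proof -
  obtain a b where E: "E = (\<Union>i<N. cis ` {a i..b i})" "\<forall>i<N. a i < b i \<and> b i - a i < 2*pi"
     "\<forall>i<N. \<forall>j<N. i \<noteq> j \<longrightarrow> cis ` {a i..b i} \<inter> cis ` {a j..b j} = {}"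
    using arcs_repr[OF assms(2)] by blast
  obtain c d where F: "F = (\<Union>i<N. cis ` {c i..d i})" "\<forall>i<N. c i < d i \<and> d i - c i < 2*pi"
     "\<forall>i<N. \<forall>j<N. i \<noteq> j \<longrightarrow> cis ` {c i..d i} \<inter> cis ` {c j..d j} = {}"
    using arcs_repr[OF assms(3)] by blast
  have Ec: "closed E" and Fc: "closed F" using E(1) F(1) arcs_closed by auto
  have neg: "II E (-n) = II F (-n)" if "0 \<le> n" "n \<le> int N" for n
  proof -
    have "fourier_indicator E n = fourier_indicator F n" using assms(4) that by blast
    hence "integral {0..2*pi} (\<lambda>\<theta>. indicator E (cis \<theta>) * cis (- (of_int n * \<theta>))) =
           integral {0..2*pi} (\<lambda>\<theta>. indicator F (cis \<theta>) * cis (- (of_int n * \<theta>)))"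
      unfolding fourier_indicator_def by simp
    thus ?thesis unfolding II_def by simp
  qed
  have IIeq: "II E k = II F k" if "\<bar>k\<bar> \<le> int N" for k
  proof (cases "k \<le> 0")
    case True
    thus ?thesis using neg[of "-k"] that by simp
  next
    case False
    hence "II E (-k) = II F (-k)" using neg[of k] that by simp
    hence "cnj (II E (-k)) = cnj (II F (-k))" by simp
    thus ?thesis by (simp add: II_cnj)
  qed
  have intS: "(\<lambda>\<theta>. indicator S (cis \<theta>) * cis (of_int k * \<theta>)) integrable_on {0..2*pi}" if "closed S" for S k
    using that by (intro indic_integrable continuous_on_cis continuous_intros)
  have G: "(\<lambda>\<theta>. (indicator X (cis \<theta>) - indicator Y (cis \<theta>)) * cis (of_int k * \<theta>)) integrable_on {0..2*pi} \<and>
       integral {0..2*pi} (\<lambda>\<theta>. (indicator X (cis \<theta>) - indicator Y (cis \<theta>)) * cis (of_int k * \<theta>)) = 0"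
    if "closed X" "closed Y" "II X k = II Y k" for X Y k
  proof -
    have e: "(\<lambda>\<theta>. (indicator X (cis \<theta>) - indicator Y (cis \<theta>)) * cis (of_int k * \<theta>)) =
      (\<lambda>\<theta>. indicator X (cis \<theta>) * cis (of_int k * \<theta>) - indicator Y (cis \<theta>) * cis (of_int k * \<theta>))"
      by (simp add: algebra_simps)
    show ?thesis unfolding e using intS[OF that(1)] intS[OF that(2)] that(3)
      by (simp add: integrable_diff integral_diff II_def)
  qed
  have "E \<subseteq> F"
    by (rule main_lemma[OF E(1) _ _ Fc]) (use E(2,3) G[OF Ec Fc] IIeq in auto)
  moreover have "F \<subseteq> E"
    by (rule main_lemma[OF F(1) _ _ Ec]) (use F(2,3) G[OF Fc Ec] IIeq in auto)
  ultimately show ?thesis by blast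
qed

end
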